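(* For even $m\ge 18$, let $G^{\mathrm{dist}}_m$ be the graph with vertex set $\{u^*\}\cup A\cup\{z_1,z_2,x,y\}\cup L$, where $A=\{a_1,a_2,a_3,a_4\}$ induces a $K_4$, $|L|=m-15$, $u^*$ is adjacent to every vertex of $A\cup\{z_1,z_2\}\cup L$, and the remaining edges are exactly $z_1x$, $z_2y$, $xy$ (so $G^{\mathrm{dist}}_m$ has $m$ edges). Its spectral radius equals the largest root of \[ f_{\mathrm{dist}}(x)=x^5-4x^4+(11-m)x^3+(4m-45)x^2+(28-2m)x+45-3m, \] and $\rho(G^{\mathrm{dist}}_m)<\rho'(m)$.
   Context: $\rho(G)$ denotes the adjacency spectral radius. For even $m$, $\rho'(m)$ is the largest real root of $p_m(x)=x^4-mx^2-(m-2)x+\frac{m}{2}-1$. *)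

theory Defs
  imports "Jordan_Normal_Form.Spectral_Radius"
begin

text \<open>A finite simple graph on vertex set {0..<n}, given by a symmetric irreflexive
  adjacency predicate.\<close>

definition adj_matrix :: "nat \<Rightarrow> (nat \<Rightarrow> nat \<Rightarrow> bool) \<Rightarrow> complex mat" where
  "adj_matrix n E = mat n n (\<lambda>(i, j). if E i j then 1 else 0)"

definition graph_spectral_radius :: "nat \<Rightarrow> (nat \<Rightarrow> nat \<Rightarrow> bool) \<Rightarrow> real" where
  "graph_spectral_radius n E = spectral_radius (adj_matrix n E)"

definition largest_real_root :: "real poly \<Rightarrow> real" where
  "largest_real_root p = Max {x. poly p x = 0}"

definition p_poly :: "nat \<Rightarrow> real poly" where
  "p_poly m = [: real m / 2 - 1, - (real m - 2), - real m, 0, 1 :]"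

definition rho' :: "nat \<Rightarrow> real" where
  "rho' m = largest_real_root (p_poly m)"

definition f_dist :: "nat \<Rightarrow> real poly" where
  "f_dist m = [: 45 - 3 * real m, 28 - 2 * real m, 4 * real m - 45, 11 - real m, -4, 1 :]"

text \<open>The graph G^dist_m on vertices {0..<m-6}:
  0 = u*, 1..4 = a_1..a_4 (the K_4 A), 5 = z_1, 6 = z_2, 7 = x, 8 = y,
  9..m-7 = L (so |L| = m-15).\<close>
definition dist_num_vertices :: "nat \<Rightarrow> nat" where
  "dist_num_vertices m = m - 6"

definition dist_edge0 :: "nat \<Rightarrow> nat \<Rightarrow> nat \<Rightarrow> bool" where
  "dist_edge0 m i j \<longleftrightarrow>
     (i = 0 \<and> ((1 \<le> j \<and> j \<le> 6) \<or> (9 \<le> j \<and> j < dist_num_vertices m)))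
   \<or> (1 \<le> i \<and> i < j \<and> j \<le> 4)
   \<or> (i = 5 \<and> j = 7) \<or> (i = 6 \<and> j = 8) \<or> (i = 7 \<and> j = 8)"

definition dist_adj :: "nat \<Rightarrow> nat \<Rightarrow> nat \<Rightarrow> bool" where
  "dist_adj m i j \<longleftrightarrow> dist_edge0 m i j \<or> dist_edge0 m j i"

end

theory Submission
  imports Defs
begin


lemma f_eval: "poly (f_dist m) x = x^5 - 4*x^4 + (11 - real m)*x^3 + (4*real m - 45)*x^2 + (28 - 2*real m)*x + 45 - 3*real m"
  by (simp add: f_dist_def algebra_simps power_numeral_reduce)

lemma p_eval2: "2 * poly (p_poly m) x = 2*x^4 - 2*real m * x^2 - 2*(real m - 2)*x + real m - 2"
  by (simp add: p_poly_def algebra_simps power_numeral_reduce)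

lemma G_pos:
  fixes y :: real assumes "y \<ge> 21"
  shows "2*y^6 + 45*y^5 - 1850*y^4 - 3375*y^3 + 109375*y^2 + 168750*y - 609375 > 0"
proof -
  define s where "s = y - 21"
  have s: "s \<ge> 0" using assms s_def by simp
  have y: "y = s + 21" using s_def by simp
  have "2*y^6 + 45*y^5 - 1850*y^4 - 3375*y^3 + 109375*y^2 + 168750*y - 609375
     = 15439812 + 24533412 * s + 5003530 * s^2 + 410115 * s^3 + 16105 * s^4 + 297*s^5 + 2*s^6"
    unfolding y by (simp add: eval_nat_numeral algebra_simps)
  also have "\<dots> > 0" using s by (intro add_pos_nonneg) auto
  finally show ?thesis .
qed

lemma D_pos:
  fixes x :: real assumes "x \<ge> 21/5"
  shows "2*x^6 + 9*x^5 - 74*x^4 - 27*x^3 + 175*x^2 + 54*x - 39 > 0"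
proof -
  have "2*(5*x)^6 + 45*(5*x)^5 - 1850*(5*x)^4 - 3375*(5*x)^3 + 109375*(5*x)^2 + 168750*(5*x) - 609375 > 0"
    using assms by (intro G_pos) simp
  also have "2*(5*x)^6 + 45*(5*x)^5 - 1850*(5*x)^4 - 3375*(5*x)^3 + 109375*(5*x)^2 + 168750*(5*x) - 609375
     = 15625 * (2*x^6 + 9*x^5 - 74*x^4 - 27*x^3 + 175*x^2 + 54*x - 39)"
    by (simp add: power_mult_distrib algebra_simps)
  finally show ?thesis by simp
qed

lemma p_neg_at_f_root:
  fixes r :: real
  assumes "poly (f_dist m) r = 0" "r \<ge> 21/5"
  shows "poly (p_poly m) r < 0"
proof -
  let ?den = "(r - 3) * (r^2 - r - 1)"
  let ?D = "2*r^6 + 9*r^5 - 74*r^4 - 27*r^3 + 175*r^2 + 54*r - 39"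
  have id: "(2 * poly (p_poly m) r) * ?den = (2*r^2 + 2*r - 1) * poly (f_dist m) r - ?D"
    unfolding f_eval p_eval2 by (simp add: eval_nat_numeral algebra_simps)
  have den: "?den > 0"
  proof -
    have "r * r \<ge> 21/5 * r" using assms(2) by (intro mult_right_mono) auto
    hence "r^2 - r - 1 > 0" using assms(2) unfolding power2_eq_square by linarith
    thus ?thesis using assms(2) by simp
  qed
  have "(2 * poly (p_poly m) r) * ?den < 0" using id assms(1) D_pos[OF assms(2)] by simp
  moreover have "poly (p_poly m) r \<ge> 0 \<Longrightarrow> (2 * poly (p_poly m) r) * ?den \<ge> 0"
    using den by simp
  ultimately show ?thesis by linarith
qed



lemma root_above:
  fixes p :: "real poly"
  assumes lc: "lead_coeff p > 0" and a: "poly p a < 0"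
  shows "a < largest_real_root p \<and> poly p (largest_real_root p) = 0"
proof -
  have p0: "p \<noteq> 0" using lc by auto
  obtain n0 where n0: "\<forall>x\<ge>n0. poly p x \<ge> lead_coeff p" using poly_pinfty_gt_lc[OF lc] by blast
  define b where "b = max n0 (a + 1)"
  have "b \<ge> n0" unfolding b_def by simp
  hence "poly p b \<ge> lead_coeff p" using n0 by blast
  hence "poly p b > 0" using lc by linarith
  moreover have "a < b" unfolding b_def by simp
  ultimately obtain x where x: "a < x" "poly p x = 0" using poly_IVT_pos[OF _ a] by blast
  have fin: "finite {x. poly p x = 0}" using poly_roots_finite[OF p0] .
  have "x \<le> largest_real_root p" unfolding largest_real_root_def using fin x by (intro Max_ge) auto
  moreover have "largest_real_root p \<in> {x. poly p x = 0}"
    unfolding largest_real_root_def using fin x by (intro Max_in) auto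
  ultimately show ?thesis using x by auto
qed

lemma f_root:
  assumes "m \<ge> 18"
  shows "21/5 < largest_real_root (f_dist m) \<and> poly (f_dist m) (largest_real_root (f_dist m)) = 0"
proof (rule root_above)
  show "lead_coeff (f_dist m) > 0" by (simp add: f_dist_def)
  have "real m \<ge> 18" using assms by simp
  moreover have "poly (f_dist m) (21/5) = 768756/3125 - 1866/125 * real m"
    unfolding f_eval by (simp add: power_divide algebra_simps add_divide_distrib diff_divide_distrib)
  ultimately show "poly (f_dist m) (21/5) < 0" by linarith
qed

lemma p_lc: "lead_coeff (p_poly m) > 0" by (simp add: p_poly_def)



lemma adj_carrier: "adj_matrix n E \<in> carrier_mat n n"
  by (simp add: adj_matrix_def)

lemma adj_mult_vec_index:
  assumes "i < n" "x \<in> carrier_vec n"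
  shows "(adj_matrix n E *\<^sub>v x) $ i = (\<Sum>j<n. if E i j then x $ j else 0)"
  using assms by (auto simp: adj_matrix_def mult_mat_vec_def scalar_prod_def lessThan_atLeast0 intro!: sum.cong)

lemma perron_bound:
  fixes E :: "nat \<Rightarrow> nat \<Rightarrow> bool" and w :: "nat \<Rightarrow> real"
  assumes w_pos: "\<And>i. i < n \<Longrightarrow> w i > 0"
  and eq: "\<And>i. i < n \<Longrightarrow> (\<Sum>j<n. if E i j then w j else 0) = r * w i"
  and ev: "eigenvalue (adj_matrix n E) lam"
  shows "norm lam \<le> r"
proof -
  let ?A = "adj_matrix n E"
  obtain x where "eigenvector ?A x lam" using ev unfolding eigenvalue_def by blast
  moreover have dim: "dim_row ?A = n" by (simp add: adj_matrix_def)
  ultimately have x: "x \<in> carrier_vec n" "x \<noteq> 0\<^sub>v n" "?A *\<^sub>v x = lam \<cdot>\<^sub>v x"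
    unfolding eigenvector_def by auto
  obtain k where k: "k < n" "x $ k \<noteq> 0"
  proof (rule ccontr)
    assume "\<not> thesis"
    hence "\<forall>k<n. x $ k = 0" using that by blast
    hence "x = 0\<^sub>v n" using x(1) by (intro eq_vecI) auto
    thus False using x(2) by simp
  qed
  define q where "q j = cmod (x $ j) / w j" for j
  define M where "M = Max (q ` {..<n})"
  have fin: "finite (q ` {..<n})" by simp
  have ne: "q ` {..<n} \<noteq> {}" using k by auto
  obtain i where i: "i < n" "q i = M" using Max_in[OF fin ne] unfolding M_def by auto
  have qle: "q j \<le> q i" if "j < n" for j using i(2) Max_ge[OF fin] that unfolding M_def by auto
  have "q k > 0" unfolding q_def using k w_pos by simp
  hence qi: "q i > 0" using qle[OF k(1)] by linarith
  have xi: "cmod (x $ i) = q i * w i" unfolding q_def using w_pos[OF i(1)] by simp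
  have xj: "cmod (x $ j) \<le> q i * w j" if "j < n" for j
  proof -
    have "cmod (x $ j) = q j * w j" unfolding q_def using w_pos[OF that] by simp
    also have "\<dots> \<le> q i * w j" using qle[OF that] w_pos[OF that] by (intro mult_right_mono) auto
    finally show ?thesis .
  qed
  have "lam * x $ i = (\<Sum>j<n. if E i j then x $ j else 0)"
    using adj_mult_vec_index[OF i(1) x(1), of E] x(3) i(1) x(1) by simp
  hence "cmod lam * cmod (x $ i) = cmod (\<Sum>j<n. if E i j then x $ j else 0)"
    by (metis norm_mult)
  also have "\<dots> \<le> (\<Sum>j<n. cmod (if E i j then x $ j else 0))" by (rule norm_sum)
  also have "\<dots> \<le> (\<Sum>j<n. if E i j then q i * w j else 0)"
    by (intro sum_mono) (auto simp: xj)
  also have "\<dots> = q i * (\<Sum>j<n. if E i j then w j else 0)"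
    by (simp add: sum_distrib_left if_distrib cong: if_cong)
  also have "\<dots> = r * cmod (x $ i)" using eq[OF i(1)] xi by simp
  finally have "cmod lam * cmod (x $ i) \<le> r * cmod (x $ i)" .
  moreover have "cmod (x $ i) > 0" using xi qi w_pos[OF i(1)] by simp
  ultimately show ?thesis by simp
qed

lemma perron_sr:
  fixes E :: "nat \<Rightarrow> nat \<Rightarrow> bool" and w :: "nat \<Rightarrow> real"
  assumes n: "n > 0"
  and w_pos: "\<And>i. i < n \<Longrightarrow> w i > 0"
  and eq: "\<And>i. i < n \<Longrightarrow> (\<Sum>j<n. if E i j then w j else 0) = r * w i"
  shows "graph_spectral_radius n E = r"
proof -
  let ?A = "adj_matrix n E"
  define v where "v = vec n (\<lambda>j. complex_of_real (w j))"
  have v: "v \<in> carrier_vec n" unfolding v_def by simp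
  have "v $ 0 \<noteq> 0" unfolding v_def using n w_pos[OF n] by simp
  hence v0: "v \<noteq> 0\<^sub>v n" using n by auto
  have "?A *\<^sub>v v = complex_of_real r \<cdot>\<^sub>v v"
  proof (rule eq_vecI)
    fix i assume "i < dim_vec (complex_of_real r \<cdot>\<^sub>v v)"
    hence i: "i < n" unfolding v_def by simp
    have "(?A *\<^sub>v v) $ i = (\<Sum>j<n. if E i j then v $ j else 0)"
      by (rule adj_mult_vec_index[OF i v])
    also have "\<dots> = (\<Sum>j<n. if E i j then complex_of_real (w j) else 0)"
      by (intro sum.cong) (auto simp: v_def)
    also have "\<dots> = complex_of_real (\<Sum>j<n. if E i j then w j else 0)"
      by (simp add: if_distrib cong: if_cong)
    also have "\<dots> = (complex_of_real r \<cdot>\<^sub>v v) $ i" using eq[OF i] i unfolding v_def by simp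
    finally show "(?A *\<^sub>v v) $ i = (complex_of_real r \<cdot>\<^sub>v v) $ i" .
  qed (simp add: adj_matrix_def v_def)
  hence "eigenvector ?A v (complex_of_real r)"
    unfolding eigenvector_def using v v0 by (simp add: adj_matrix_def)
  hence mem: "complex_of_real r \<in> spectrum ?A"
    unfolding spectrum_def eigenvalue_def by auto
  have r0: "r \<ge> 0"
  proof -
    have "0 \<le> (\<Sum>j<n. if E 0 j then w j else 0)"
      by (intro sum_nonneg) (auto intro: less_imp_le w_pos)
    hence "0 \<le> r * w 0" using eq[OF n] by simp
    thus ?thesis using w_pos[OF n] by (simp add: zero_le_mult_iff)
  qed
  have "norm (complex_of_real r) \<le> spectral_radius ?A"
    using spectral_radius_mem_max(2)[OF adj_carrier n] mem by blast
  hence le: "r \<le> spectral_radius ?A" using r0 by simp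
  have "spectral_radius ?A \<in> norm ` spectrum ?A"
    using spectral_radius_mem_max(1)[OF adj_carrier n] .
  then obtain lam where "eigenvalue ?A lam" "spectral_radius ?A = norm lam"
    unfolding spectrum_def by auto
  hence "spectral_radius ?A \<le> r" using perron_bound[OF w_pos eq] by auto
  thus ?thesis unfolding graph_spectral_radius_def using le by simp
qed



definition wv :: "real \<Rightarrow> nat \<Rightarrow> real" where
  "wv r j = (if j = 0 then 1 else if j \<le> 4 then 1/(r-3) else if j \<le> 6 then (r-1)/(r^2-r-1)
             else if j \<le> 8 then 1/(r^2-r-1) else 1/r)"

lemma row_sum:
  assumes m: "m \<ge> 18" and r: "r > 21/5" and fr: "poly (f_dist m) r = 0" and i: "i < dist_num_vertices m"
  shows "(\<Sum>j < dist_num_vertices m. if dist_adj m i j then wv r j else 0) = r * wv r i"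
proof -
  define g where "g j = (if dist_adj m i j then wv r j else 0)" for j
  have nd: "dist_num_vertices m = m - 6" by (simp add: dist_num_vertices_def)
  have "(\<Sum>j\<in>{0..<9}. g j) + (\<Sum>j\<in>{9..<m-6}. g j) = (\<Sum>j\<in>{0..<m-6}. g j)"
    by (rule sum.atLeastLessThan_concat) (use m in auto)
  hence split: "(\<Sum>j < dist_num_vertices m. g j) = (\<Sum>j\<in>{0..<9}. g j) + (\<Sum>j\<in>{9..<m-6}. g j)"
    by (simp add: nd lessThan_atLeast0)
  have tail: "(\<Sum>j\<in>{9..<m-6}. g j) = (if i = 0 then real (m-15) / r else 0)"
  proof (cases "i = 0")
    case True
    have "(\<Sum>j\<in>{9..<m-6}. g j) = (\<Sum>j\<in>{9..<m-6}. 1/r)"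
      by (intro sum.cong) (auto simp: g_def True dist_adj_def dist_edge0_def dist_num_vertices_def wv_def)
    also have "\<dots> = real (m-15) / r" using m by simp
    finally show ?thesis using True by simp
  next
    case False
    have "(\<Sum>j\<in>{9..<m-6}. g j) = (\<Sum>j\<in>{9..<m-6}. 0)"
      by (intro sum.cong) (auto simp: g_def False dist_adj_def dist_edge0_def dist_num_vertices_def wv_def)
    thus ?thesis using False by simp
  qed
  have s9: "{0..<9::nat} = {0,1,2,3,4,5,6,7,8}" by auto
  have head: "(\<Sum>j\<in>{0..<9}. g j) = g 0 + g 1 + g 2 + g 3 + g 4 + g 5 + g 6 + g 7 + g 8"
    unfolding s9 by simp
  have r3: "r - 3 > 0" using r by simp
  have "r * r \<ge> 21/5 * r" using r by (intro mult_right_mono) auto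
  hence q: "r^2 - r - 1 > 0" using r unfolding power2_eq_square by linarith
  have r0: "r > 0" using r by simp
  have m9: "9 < m - 6" using m by simp
  have G: "\<And>j. g j = (if dist_adj m i j then wv r j else 0)" by (simp add: g_def)
  consider "i = 0" | "i = 1" | "i = 2" | "i = 3" | "i = 4" | "i = 5" | "i = 6" | "i = 7" | "i = 8" | "i \<ge> 9"
    by linarith
  then have "(\<Sum>j<dist_num_vertices m. g j) = r * wv r i"
  proof cases
    case 1
    have key: "4*r*(r^2-r-1) + 2*(r-1)*r*(r-3) + real (m-15)*(r-3)*(r^2-r-1) = r*r*(r-3)*(r^2-r-1)"
    proof -
      have "r*r*(r-3)*(r^2-r-1) - (4*r*(r^2-r-1) + 2*(r-1)*r*(r-3) + real (m-15)*(r-3)*(r^2-r-1)) = poly (f_dist m) r"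
        using m unfolding f_eval by (simp add: of_nat_diff eval_nat_numeral algebra_simps)
      thus ?thesis using fr by simp
    qed
    have "(\<Sum>j<dist_num_vertices m. g j) = 4/(r-3) + 2*((r-1)/(r^2-r-1)) + real (m-15) / r"
      unfolding split head tail using 1 m9 by (simp add: G dist_adj_def dist_edge0_def dist_num_vertices_def wv_def)
    also have "\<dots> = r"
    proof -
      define Q where "Q = r^2 - r - 1"
      define M where "M = real (m - 15)"
      have Q0: "Q > 0" using q Q_def by simp
      have key': "4*r*Q + 2*(r-1)*r*(r-3) + M*(r-3)*Q = r*r*(r-3)*Q" using key unfolding Q_def M_def .
      have "4/(r-3) + 2*((r-1)/Q) + M / r = (4*r*Q + 2*(r-1)*r*(r-3) + M*(r-3)*Q) / (r*(r-3)*Q)"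
        using r3 Q0 r0 by (simp add: field_simps)
      also have "\<dots> = (r*r*(r-3)*Q) / (r*(r-3)*Q)" using key' by simp
      also have "\<dots> = r" using r3 Q0 r0 by simp
      finally show ?thesis unfolding Q_def M_def .
    qed
    finally show ?thesis using 1 by (simp add: wv_def)
  next
    case 2
    have "(\<Sum>j<dist_num_vertices m. g j) = 1 + 3/(r-3)"
      unfolding split head tail using 2 m9 by (simp add: G dist_adj_def dist_edge0_def dist_num_vertices_def wv_def)
    thus ?thesis using 2 r3 by (simp add: wv_def field_simps)
  next
    case 3
    have "(\<Sum>j<dist_num_vertices m. g j) = 1 + 3/(r-3)"
      unfolding split head tail using 3 m9 by (simp add: G dist_adj_def dist_edge0_def dist_num_vertices_def wv_def)
    thus ?thesis using 3 r3 by (simp add: wv_def field_simps)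
  next
    case 4
    have "(\<Sum>j<dist_num_vertices m. g j) = 1 + 3/(r-3)"
      unfolding split head tail using 4 m9 by (simp add: G dist_adj_def dist_edge0_def dist_num_vertices_def wv_def)
    thus ?thesis using 4 r3 by (simp add: wv_def field_simps)
  next
    case 5
    have "(\<Sum>j<dist_num_vertices m. g j) = 1 + 3/(r-3)"
      unfolding split head tail using 5 m9 by (simp add: G dist_adj_def dist_edge0_def dist_num_vertices_def wv_def)
    thus ?thesis using 5 r3 by (simp add: wv_def field_simps)
  next
    case 6
    have "(\<Sum>j<dist_num_vertices m. g j) = 1 + 1/(r^2-r-1)"
      unfolding split head tail using 6 m9 by (simp add: G dist_adj_def dist_edge0_def dist_num_vertices_def wv_def)
    thus ?thesis using 6 q by (simp add: wv_def field_simps power2_eq_square)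
  next
    case 7
    have "(\<Sum>j<dist_num_vertices m. g j) = 1 + 1/(r^2-r-1)"
      unfolding split head tail using 7 m9 by (simp add: G dist_adj_def dist_edge0_def dist_num_vertices_def wv_def)
    thus ?thesis using 7 q by (simp add: wv_def field_simps power2_eq_square)
  next
    case 8
    have "(\<Sum>j<dist_num_vertices m. g j) = (r-1)/(r^2-r-1) + 1/(r^2-r-1)"
      unfolding split head tail using 8 m9 by (simp add: G dist_adj_def dist_edge0_def dist_num_vertices_def wv_def)
    thus ?thesis using 8 q by (simp add: wv_def field_simps power2_eq_square)
  next
    case 9
    have "(\<Sum>j<dist_num_vertices m. g j) = (r-1)/(r^2-r-1) + 1/(r^2-r-1)"
      unfolding split head tail using 9 m9 by (simp add: G dist_adj_def dist_edge0_def dist_num_vertices_def wv_def)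
    thus ?thesis using 9 q by (simp add: wv_def field_simps power2_eq_square)
  next
    case 10
    have "(\<Sum>j<dist_num_vertices m. g j) = 1"
      unfolding split head tail using 10 i by (simp add: G dist_adj_def dist_edge0_def dist_num_vertices_def wv_def)
    thus ?thesis using 10 r0 by (simp add: wv_def)
  qed
  thus ?thesis by (simp add: g_def)
qed


lemma wv_pos: assumes "r > 21/5" shows "wv r j > 0"
proof -
  have "r * r \<ge> 21/5 * r" using assms by (intro mult_right_mono) auto
  hence q: "r^2 - r - 1 > 0" using assms unfolding power2_eq_square by linarith
  thus ?thesis using assms by (simp add: wv_def)
qed

theorem proposition6p3:
  fixes m :: nat
  assumes "even m" and "m \<ge> 18"
  shows "graph_spectral_radius (dist_num_vertices m) (dist_adj m) = largest_real_root (f_dist m)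
         \<and> graph_spectral_radius (dist_num_vertices m) (dist_adj m) < rho' m"
proof -
  define r where "r = largest_real_root (f_dist m)"
  have r: "21/5 < r" "poly (f_dist m) r = 0" using f_root[OF assms(2)] unfolding r_def by auto
  have n: "dist_num_vertices m > 0" using assms(2) by (simp add: dist_num_vertices_def)
  have sr: "graph_spectral_radius (dist_num_vertices m) (dist_adj m) = r"
    by (rule perron_sr[OF n, of "wv r"]) (auto intro: wv_pos[OF r(1)] row_sum[OF assms(2) r(1) r(2)])
  have "poly (p_poly m) r < 0" using p_neg_at_f_root[OF r(2)] r(1) by simp
  hence "r < rho' m" using root_above[OF p_lc] unfolding rho'_def by blast
  thus ?thesis using sr unfolding r_def by simp
qed

end
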